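(* Let $A\in\mathbb{R}^{n\times n}$ be monotone, let $A=P_1-R_1+S_1$ be a double weak regular splitting and $A=P_2-R_2+S_2$ a double regular splitting of $A$. Suppose $-1\notin\sigma(R_2P_1^{-1})$ and $\widehat{\mathcal{A}}^{-1}\geq 0$, where $\widehat{\mathcal{A}}=(I+R_2P_1^{-1})A$. If $P_1^{-1}R_1\geq P_2^{-1}R_2$, $P_2^{-1}S_2\geq P_1^{-1}S_1$ and $P_2^{-1}R_2+P_2^{-1}S_2\leq 0$, then $\rho(\mathcal{W}_{12})\leq\min\{\rho(T_1),\rho(T_2)\}<1$, where $$\mathcal{W}_{12}=\begin{pmatrix} P_2^{-1}R_2P_1^{-1}R_1-P_2^{-1}S_2 & -P_2^{-1}R_2P_1^{-1}S_1\\ I & 0\end{pmatrix},\qquad T_i=\begin{pmatrix} P_i^{-1}R_i & -P_i^{-1}S_i\\ I&0\end{pmatrix}\ (i=1,2).$$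
   Context: Inequalities are entrywise; $\rho$ is the spectral radius, $\sigma$ the spectrum. $A$ is monotone if $A$ is nonsingular and $A^{-1}\geq 0$. A double splitting $A=P-R+S$ with $P$ nonsingular is a double regular splitting if $P^{-1}\geq0$, $R\geq0$, $S\leq0$, and a double weak regular splitting if $P^{-1}\geq 0$, $P^{-1}R\geq0$, $P^{-1}S\leq0$. *)

theory Defs
  imports "Jordan_Normal_Form.Spectral_Radius"
begin

text \<open>Matrices are JNF matrices of type real mat; the order on matrices is entrywise
(less_eq_mat, which also requires equal dimensions). Q is (the) inverse of M.\<close>

definition is_inverse_mat :: "nat \<Rightarrow> real mat \<Rightarrow> real mat \<Rightarrow> bool" where
  "is_inverse_mat n M Q \<longleftrightarrow> M \<in> carrier_mat n n \<and> Q \<in> carrier_mat n n \<and>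
     M * Q = 1\<^sub>m n \<and> Q * M = 1\<^sub>m n"

definition monotone_mat :: "nat \<Rightarrow> real mat \<Rightarrow> bool" where
  "monotone_mat n M \<longleftrightarrow> (\<exists>Q. is_inverse_mat n M Q \<and> 0\<^sub>m n n \<le> Q)"

definition double_regular_splitting ::
  "nat \<Rightarrow> real mat \<Rightarrow> real mat \<Rightarrow> real mat \<Rightarrow> real mat \<Rightarrow> real mat \<Rightarrow> bool" where
  "double_regular_splitting n A P R S Pinv \<longleftrightarrow>
     A \<in> carrier_mat n n \<and> R \<in> carrier_mat n n \<and> S \<in> carrier_mat n n \<and>
     is_inverse_mat n P Pinv \<and> A = P - R + S \<and>
     0\<^sub>m n n \<le> Pinv \<and> 0\<^sub>m n n \<le> R \<and> S \<le> 0\<^sub>m n n"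

definition double_weak_regular_splitting ::
  "nat \<Rightarrow> real mat \<Rightarrow> real mat \<Rightarrow> real mat \<Rightarrow> real mat \<Rightarrow> real mat \<Rightarrow> bool" where
  "double_weak_regular_splitting n A P R S Pinv \<longleftrightarrow>
     A \<in> carrier_mat n n \<and> R \<in> carrier_mat n n \<and> S \<in> carrier_mat n n \<and>
     is_inverse_mat n P Pinv \<and> A = P - R + S \<and>
     0\<^sub>m n n \<le> Pinv \<and> 0\<^sub>m n n \<le> Pinv * R \<and> Pinv * S \<le> 0\<^sub>m n n"

definition rspectrum :: "real mat \<Rightarrow> complex set" where
  "rspectrum M = spectrum (map_mat complex_of_real M)"

definition rho :: "real mat \<Rightarrow> real" where
  "rho M = spectral_radius (map_mat complex_of_real M)"

end

theory Submission
  imports Defs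
begin


lemma mv_nth:
  assumes "A \<in> carrier_mat n m" "x \<in> carrier_vec m" "i < n"
  shows "(A *\<^sub>v x) $ i = (\<Sum>j<m. A $$ (i,j) * x $ j)"
  using assms by (auto simp: scalar_prod_def atLeast0LessThan intro!: sum.cong)

lemma nonneg_entry:
  assumes "0\<^sub>m n n \<le> (A::real mat)" "i < n" "j < n"
  shows "0 \<le> A $$ (i,j)"
  using assms unfolding less_eq_mat_def by auto

lemma le_entry:
  assumes "(A::real mat) \<le> B" "B \<in> carrier_mat n n" "i < n" "j < n"
  shows "A $$ (i,j) \<le> B $$ (i,j)"
  using assms unfolding less_eq_mat_def by auto

lemma perron_sub:
  fixes M :: "real mat"
  assumes M: "M \<in> carrier_mat n n" and n: "n > 0" and nn: "\<And>i j. i < n \<Longrightarrow> j < n \<Longrightarrow> 0 \<le> M $$ (i,j)"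
  shows "\<exists>w. w \<in> carrier_vec n \<and> (\<forall>i<n. 0 \<le> w $ i) \<and> (\<exists>i<n. 0 < w $ i)
     \<and> (\<forall>i<n. rho M * w $ i \<le> (M *\<^sub>v w) $ i)"
proof -
  define Mc where "Mc = map_mat complex_of_real M"
  have Mc: "Mc \<in> carrier_mat n n" using M by (simp add: Mc_def)
  from spectral_radius_mem_max(1)[OF Mc n] obtain ev where ev: "ev \<in> spectrum Mc"
    and nev: "rho M = cmod ev" unfolding rho_def Mc_def by auto
  from ev obtain v where evec: "eigenvector Mc v ev" unfolding spectrum_def eigenvalue_def by auto
  hence v: "v \<in> carrier_vec n" "v \<noteq> 0\<^sub>v n" "Mc *\<^sub>v v = ev \<cdot>\<^sub>v v"
    using Mc unfolding eigenvector_def by auto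
  from v(1,2) obtain i0 where i0: "i0 < n" "v $ i0 \<noteq> 0" by (metis eq_vecI carrier_vecD index_zero_vec(1,2))
  define w where "w = vec n (\<lambda>i. cmod (v $ i))"
  have w: "w \<in> carrier_vec n" unfolding w_def by simp
  show ?thesis
  proof (intro exI[of _ w] conjI allI impI)
    show "\<exists>i<n. 0 < w $ i" using i0 by (auto simp: w_def intro!: exI[of _ i0])
  next
    fix i assume i: "i < n"
    show "0 \<le> w $ i" using i by (simp add: w_def)
    have "rho M * w $ i = cmod ((ev \<cdot>\<^sub>v v) $ i)" using i v by (simp add: w_def nev norm_mult)
    also have "\<dots> = cmod ((Mc *\<^sub>v v) $ i)" using v by simp
    also have "\<dots> = cmod (\<Sum>j<n. Mc $$ (i,j) * v $ j)" using mv_nth[OF Mc v(1) i] by simp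
    also have "\<dots> \<le> (\<Sum>j<n. cmod (Mc $$ (i,j) * v $ j))" by (rule norm_sum)
    also have "\<dots> = (\<Sum>j<n. M $$ (i,j) * w $ j)"
      using i M nn by (auto simp: Mc_def w_def norm_mult intro!: sum.cong)
    also have "\<dots> = (M *\<^sub>v w) $ i" using mv_nth[OF M w i] by simp
    finally show "rho M * w $ i \<le> (M *\<^sub>v w) $ i" .
  qed (fact w)
qed



lemma rho_nonneg: assumes "M \<in> carrier_mat n n" "n > 0" shows "0 \<le> rho M"
proof -
  have Mc: "map_mat complex_of_real M \<in> carrier_mat n n" using assms by simp
  from spectral_radius_mem_max(1)[OF Mc assms(2)] show ?thesis unfolding rho_def by auto
qed

lemma growth_le:
  fixes r t a D :: real
  assumes a: "a > 0" and r: "r \<ge> 0" and t: "t \<ge> 0" and le: "\<And>k. r ^ k * a \<le> D * t ^ k"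
  shows "r \<le> t"
proof (rule ccontr)
  assume "\<not> r \<le> t" hence rt: "t < r" by simp
  show False
  proof (cases "t = 0")
    case True
    with le[of 1] have "r * a \<le> 0" by simp
    moreover have "0 < r * a" using a rt True by simp
    ultimately show False by simp
  next
    case False
    hence tp: "t > 0" using t by simp
    have "1 < r / t" using rt tp by simp
    from real_arch_pow[OF this] obtain k where k: "D / a < (r/t)^k" by blast
    hence "D < (r/t)^k * a" using a by (simp add: field_simps)
    hence "D * t^k < r^k * a" using tp by (simp add: field_simps power_divide)
    with le[of k] show False by simp
  qed
qed

lemma rho_upper:
  fixes M :: "real mat"
  assumes M: "M \<in> carrier_mat n n" and n: "n > 0" and nn: "\<And>i j. i < n \<Longrightarrow> j < n \<Longrightarrow> 0 \<le> M $$ (i,j)"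
    and x: "x \<in> carrier_vec n" and xp: "\<And>i. i < n \<Longrightarrow> 0 < x $ i"
    and Mx: "\<And>i. i < n \<Longrightarrow> (M *\<^sub>v x) $ i \<le> t * x $ i" and t: "0 \<le> t"
  shows "rho M \<le> t"
proof -
  from perron_sub[OF M n nn] obtain w where w: "w \<in> carrier_vec n" "\<And>i. i<n \<Longrightarrow> 0 \<le> w $ i"
    and i0: "\<exists>i<n. 0 < w $ i" and Mw: "\<And>i. i<n \<Longrightarrow> rho M * w $ i \<le> (M *\<^sub>v w) $ i" by blast
  define r where "r = rho M"
  have r0: "0 \<le> r" unfolding r_def by (rule rho_nonneg[OF M n])
  define C where "C = (\<Sum>i<n. w $ i / x $ i)"
  have C0: "0 \<le> C" unfolding C_def using w(2) xp by (auto intro!: sum_nonneg divide_nonneg_pos)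
  have main: "\<forall>i<n. r ^ k * w $ i \<le> C * t ^ k * x $ i" for k
  proof (induction k)
    case 0
    show ?case
    proof (intro allI impI)
      fix i assume i: "i < n"
      have "w $ i / x $ i \<le> C" unfolding C_def
        by (rule member_le_sum) (use i w(2) xp in \<open>auto intro: divide_nonneg_pos\<close>)
      thus "r ^ 0 * w $ i \<le> C * t ^ 0 * x $ i" using xp[OF i] by (simp add: field_simps)
    qed
  next
    case (Suc k)
    show ?case
    proof (intro allI impI)
      fix i assume i: "i < n"
      have "r ^ Suc k * w $ i = r ^ k * (r * w $ i)" by simp
      also have "\<dots> \<le> r ^ k * (M *\<^sub>v w) $ i" using Mw[OF i] r0 unfolding r_def
        by (intro mult_left_mono) auto
      also have "\<dots> = (\<Sum>j<n. M $$ (i,j) * (r ^ k * w $ j))" using mv_nth[OF M w(1) i]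
        by (simp add: sum_distrib_left algebra_simps)
      also have "\<dots> \<le> (\<Sum>j<n. M $$ (i,j) * (C * t ^ k * x $ j))"
        using Suc.IH nn i by (intro sum_mono mult_left_mono) auto
      also have "\<dots> = C * t ^ k * (M *\<^sub>v x) $ i" using mv_nth[OF M x i]
        by (simp add: sum_distrib_left algebra_simps)
      also have "\<dots> \<le> C * t ^ k * (t * x $ i)" using Mx[OF i] C0 t
        by (intro mult_left_mono) auto
      finally show "r ^ Suc k * w $ i \<le> C * t ^ Suc k * x $ i" by (simp add: algebra_simps)
    qed
  qed
  from i0 obtain i where i: "i < n" "0 < w $ i" by blast
  have "r \<le> t"
    by (rule growth_le[OF i(2) r0 t, of "C * x $ i"]) (use main i in \<open>auto simp: algebra_simps\<close>)
  thus ?thesis unfolding r_def .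
qed



lemma eig_scale:
  fixes A :: "complex mat"
  assumes A: "A \<in> carrier_mat n n" and c: "c \<noteq> 0" and ev: "eigenvalue (c \<cdot>\<^sub>m A) e"
  shows "eigenvalue A (e / c)"
proof -
  from ev obtain v where "eigenvector (c \<cdot>\<^sub>m A) v e" unfolding eigenvalue_def by auto
  hence v: "v \<in> carrier_vec n" "v \<noteq> 0\<^sub>v n" "(c \<cdot>\<^sub>m A) *\<^sub>v v = e \<cdot>\<^sub>v v"
    using A unfolding eigenvector_def by auto
  have "A *\<^sub>v v = (e / c) \<cdot>\<^sub>v v"
  proof (rule eq_vecI)
    fix i assume i: "i < dim_vec ((e / c) \<cdot>\<^sub>v v)"
    hence i': "i < n" using v by simp
    have "((c \<cdot>\<^sub>m A) *\<^sub>v v) $ i = c * (A *\<^sub>v v) $ i" using A v(1) i' by simp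
    moreover have "((c \<cdot>\<^sub>m A) *\<^sub>v v) $ i = e * v $ i" using arg_cong[OF v(3), of "\<lambda>x. x $ i"] i' v(1) by simp
    ultimately have "c * (A *\<^sub>v v) $ i = e * v $ i" by simp
    thus "(A *\<^sub>v v) $ i = ((e / c) \<cdot>\<^sub>v v) $ i" using c i' v(1) by (simp add: field_simps)
  qed (use A v in simp)
  thus ?thesis using v A unfolding eigenvalue_def eigenvector_def by auto
qed

lemma pow_smult_mat:
  assumes A: "(A :: 'a :: comm_semiring_1 mat) \<in> carrier_mat n n"
  shows "(c \<cdot>\<^sub>m A) ^\<^sub>m k = (c ^ k) \<cdot>\<^sub>m (A ^\<^sub>m k)"
proof (induction k)
  case 0 show ?case using A by (auto intro!: eq_matI)
next
  case (Suc k)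
  have "(c \<cdot>\<^sub>m A) ^\<^sub>m Suc k = ((c ^ k) \<cdot>\<^sub>m (A ^\<^sub>m k)) * (c \<cdot>\<^sub>m A)" using Suc by simp
  also have "\<dots> = (c ^ Suc k) \<cdot>\<^sub>m (A ^\<^sub>m Suc k)"
    by (rule eq_matI) (use A in \<open>auto simp: ac_simps\<close>)
  finally show ?case .
qed

lemma funpow_mv:
  assumes M: "M \<in> carrier_mat n n" and g: "g \<in> carrier_vec n"
  shows "(((*\<^sub>v) M) ^^ k) g = (M ^\<^sub>m k) *\<^sub>v g"
  using g
proof (induction k arbitrary: g)
  case 0 thus ?case using M by simp
next
  case (Suc k)
  have "(((*\<^sub>v) M) ^^ Suc k) g = (((*\<^sub>v) M) ^^ k) (M *\<^sub>v g)" by (simp only: funpow_Suc_right comp_def)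
  also have "\<dots> = (M ^\<^sub>m k) *\<^sub>v (M *\<^sub>v g)" using Suc M by simp
  also have "\<dots> = (M ^\<^sub>m Suc k) *\<^sub>v g" using M Suc.prems by (simp add: assoc_mult_mat_vec[of _ n n _ n])
  finally show ?case .
qed

lemma decay:
  fixes M :: "real mat"
  assumes M: "M \<in> carrier_mat n n" and n: "n > 0" and r1: "rho M < 1" and g: "g \<in> carrier_vec n"
    and i: "i < n"
  shows "(\<lambda>k. ((((*\<^sub>v) M) ^^ k) g) $ i) \<longlonglongrightarrow> 0"
proof -
  define r where "r = (rho M + 1) / 2"
  have r0: "0 < r" "r < 1" "rho M < r" using rho_nonneg[OF M n] r1 by (auto simp: r_def)
  define Mc where "Mc = map_mat complex_of_real M"
  have Mc: "Mc \<in> carrier_mat n n" using M by (simp add: Mc_def)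
  define c where "c = complex_of_real (1 / r)"
  have c0: "c \<noteq> 0" using r0 by (simp add: c_def)
  define Bc where "Bc = c \<cdot>\<^sub>m Mc"
  have Bc: "Bc \<in> carrier_mat n n" using Mc by (simp add: Bc_def)
  have "spectral_radius Bc < 1"
  proof -
    from spectral_radius_mem_max(1)[OF Bc n] obtain e where e: "e \<in> spectrum Bc"
      and se: "spectral_radius Bc = cmod e" by auto
    have "eigenvalue Mc (e / c)" using eig_scale[OF Mc c0] e unfolding Bc_def spectrum_def by auto
    hence "cmod (e / c) \<le> rho M" unfolding rho_def Mc_def[symmetric]
      by (intro spectral_radius_mem_max(2)[OF Mc n]) (auto simp: spectrum_def)
    hence "cmod e * r \<le> rho M" using r0 by (simp add: c_def norm_divide norm_mult)
    hence "cmod e * r < 1 * r" using r0 by linarith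
    hence "cmod e < 1" using r0(1) mult_less_cancel_right_pos by blast
    thus ?thesis using se by simp
  qed
  from spectral_radius_jnf_norm_bound_less_1_upper_triangular[OF Bc this]
  obtain C where C: "\<And>k. norm_bound (Bc ^\<^sub>m k) C" by auto
  have entry: "\<bar>(M ^\<^sub>m k) $$ (a,b)\<bar> \<le> C * r ^ k" if ab: "a < n" "b < n" for k a b
  proof -
    have "Bc ^\<^sub>m k = (c ^ k) \<cdot>\<^sub>m (Mc ^\<^sub>m k)" unfolding Bc_def by (rule pow_smult_mat[OF Mc])
    also have "Mc ^\<^sub>m k = map_mat complex_of_real (M ^\<^sub>m k)" unfolding Mc_def
      by (rule of_real_hom.mat_hom_pow[OF M, symmetric])
    finally have "Bc ^\<^sub>m k = (c ^ k) \<cdot>\<^sub>m map_mat complex_of_real (M ^\<^sub>m k)" .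
    with C[of k] ab M have "cmod (c ^ k * complex_of_real ((M ^\<^sub>m k) $$ (a,b))) \<le> C"
      unfolding norm_bound_def by auto
    hence "(1/r) ^ k * \<bar>(M ^\<^sub>m k) $$ (a,b)\<bar> \<le> C" using r0
      by (simp add: c_def norm_mult norm_power norm_divide)
    thus ?thesis using r0 by (simp add: field_simps power_divide)
  qed
  define K where "K = (\<Sum>j<n. C * \<bar>g $ j\<bar>)"
  have bound: "norm (((((*\<^sub>v) M) ^^ k) g) $ i) \<le> r ^ k * K" for k
  proof -
    have "norm (((((*\<^sub>v) M) ^^ k) g) $ i) = \<bar>(\<Sum>j<n. (M ^\<^sub>m k) $$ (i,j) * g $ j)\<bar>"
      using funpow_mv[OF M g, of k] mv_nth[OF pow_carrier_mat[OF M, of k] g i] by simp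
    also have "\<dots> \<le> (\<Sum>j<n. \<bar>(M ^\<^sub>m k) $$ (i,j) * g $ j\<bar>)" by (rule sum_abs)
    also have "\<dots> \<le> (\<Sum>j<n. C * r ^ k * \<bar>g $ j\<bar>)"
      using entry i by (auto intro!: sum_mono mult_right_mono simp: abs_mult)
    also have "\<dots> = r ^ k * K" unfolding K_def by (simp add: sum_distrib_left algebra_simps)
    finally show ?thesis .
  qed
  have "(\<lambda>k. r ^ k * K) \<longlonglongrightarrow> 0"
    using r0 by (intro tendsto_mult_left_zero LIMSEQ_power_zero) auto
  thus ?thesis by (rule tendsto_0_le[where K=1]) (use bound in \<open>auto intro!: always_eventually order_trans[OF _ abs_ge_self]\<close>)
qed



lemma mono_mv:
  fixes M :: "real mat"
  assumes M: "M \<in> carrier_mat n m" and nn: "\<And>j. j < m \<Longrightarrow> 0 \<le> M $$ (i,j)" and i: "i < n"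
    and x: "x \<in> carrier_vec m" and y: "y \<in> carrier_vec m" and le: "\<And>j. j < m \<Longrightarrow> x $ j \<le> y $ j"
  shows "(M *\<^sub>v x) $ i \<le> (M *\<^sub>v y) $ i"
  unfolding mv_nth[OF M x i] mv_nth[OF M y i]
  by (rule sum_mono, rule mult_left_mono) (use nn le in auto)

lemma nonneg_mv:
  fixes M :: "real mat"
  assumes M: "M \<in> carrier_mat n m" and nn: "\<And>j. j < m \<Longrightarrow> 0 \<le> M $$ (i,j)" and i: "i < n"
    and x: "x \<in> carrier_vec m" and le: "\<And>j. j < m \<Longrightarrow> 0 \<le> x $ j"
  shows "0 \<le> (M *\<^sub>v x) $ i"
  unfolding mv_nth[OF M x i] by (rule sum_nonneg) (use nn le in auto)

lemma le_mat_mv: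
  fixes M N :: "real mat"
  assumes M: "M \<in> carrier_mat n m" and N: "N \<in> carrier_mat n m"
    and le: "\<And>j. j < m \<Longrightarrow> M $$ (i,j) \<le> N $$ (i,j)" and i: "i < n"
    and x: "x \<in> carrier_vec m" and nn: "\<And>j. j < m \<Longrightarrow> 0 \<le> x $ j"
  shows "(M *\<^sub>v x) $ i \<le> (N *\<^sub>v x) $ i"
  unfolding mv_nth[OF M x i] mv_nth[OF N x i]
  by (rule sum_mono, rule mult_right_mono) (use nn le in auto)

lemma mult_nonneg_entry:
  fixes A B :: "real mat"
  assumes A: "A \<in> carrier_mat n k" and B: "B \<in> carrier_mat k m" and i: "i < n" and j: "j < m"
    and a: "\<And>l. l < k \<Longrightarrow> 0 \<le> A $$ (i,l)" and b: "\<And>l. l < k \<Longrightarrow> 0 \<le> B $$ (l,j)"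
  shows "0 \<le> (A * B) $$ (i,j)"
  using A B i j a b by (auto simp: scalar_prod_def intro!: sum_nonneg)

lemma mult_nonpos_entry:
  fixes A B :: "real mat"
  assumes A: "A \<in> carrier_mat n k" and B: "B \<in> carrier_mat k m" and i: "i < n" and j: "j < m"
    and a: "\<And>l. l < k \<Longrightarrow> 0 \<le> A $$ (i,l)" and b: "\<And>l. l < k \<Longrightarrow> B $$ (l,j) \<le> 0"
  shows "(A * B) $$ (i,j) \<le> 0"
  using A B i j a b by (auto simp: scalar_prod_def intro!: sum_nonpos mult_nonneg_nonpos)

lemma rho_smult_le:
  fixes M :: "real mat"
  assumes M: "M \<in> carrier_mat n n" and n: "n > 0" and c: "c > 0"
  shows "rho (c \<cdot>\<^sub>m M) \<le> c * rho M"
proof -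
  define Mc where "Mc = map_mat complex_of_real M"
  have Mc: "Mc \<in> carrier_mat n n" using M by (simp add: Mc_def)
  have eq: "map_mat complex_of_real (c \<cdot>\<^sub>m M) = complex_of_real c \<cdot>\<^sub>m Mc"
    unfolding Mc_def by (rule eq_matI) auto
  have Bc: "complex_of_real c \<cdot>\<^sub>m Mc \<in> carrier_mat n n" using Mc by simp
  from spectral_radius_mem_max(1)[OF Bc n] obtain e where e: "e \<in> spectrum (complex_of_real c \<cdot>\<^sub>m Mc)"
    and se: "spectral_radius (complex_of_real c \<cdot>\<^sub>m Mc) = cmod e" by auto
  have "eigenvalue Mc (e / complex_of_real c)" using eig_scale[OF Mc] e c unfolding spectrum_def by auto
  hence "cmod (e / complex_of_real c) \<le> rho M" unfolding rho_def Mc_def[symmetric]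
    by (intro spectral_radius_mem_max(2)[OF Mc n]) (auto simp: spectrum_def)
  hence "cmod e / c \<le> rho M" using c by (simp add: norm_divide)
  hence "cmod e \<le> c * rho M" using c by (simp add: field_simps)
  thus ?thesis unfolding rho_def eq se .
qed

lemma rho_lower:
  fixes M :: "real mat"
  assumes M: "M \<in> carrier_mat n n" and n: "n > 0" and nn: "\<And>i j. i < n \<Longrightarrow> j < n \<Longrightarrow> 0 \<le> M $$ (i,j)"
    and w: "w \<in> carrier_vec n" and w0: "\<And>i. i < n \<Longrightarrow> 0 \<le> w $ i" and i0: "i0 < n" "0 < w $ i0"
    and t: "0 < t" and Mw: "\<And>i. i < n \<Longrightarrow> t * w $ i \<le> (M *\<^sub>v w) $ i"
  shows "t \<le> rho M"
proof (rule ccontr)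
  assume "\<not> t \<le> rho M" hence lt: "rho M < t" by simp
  define B where "B = (1/t) \<cdot>\<^sub>m M"
  have B: "B \<in> carrier_mat n n" using M by (simp add: B_def)
  have Bnn: "\<And>i j. i < n \<Longrightarrow> j < n \<Longrightarrow> 0 \<le> B $$ (i,j)" using nn M t by (simp add: B_def)
  have "rho B \<le> (1/t) * rho M" unfolding B_def by (rule rho_smult_le[OF M n]) (use t in simp)
  also have "\<dots> < 1" using lt t by (simp add: field_simps)
  finally have rB: "rho B < 1" .
  have Bw: "w $ i \<le> (B *\<^sub>v w) $ i" if i: "i < n" for i
  proof -
    have "(B *\<^sub>v w) $ i = (1/t) * (M *\<^sub>v w) $ i" using M w i by (simp add: B_def)
    hence "t * w $ i \<le> t * (B *\<^sub>v w) $ i" using Mw[OF i] t by simp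
    thus ?thesis using t by (simp add: mult_le_cancel_left_pos)
  qed
  have it: "(((*\<^sub>v) B ^^ k) w) \<in> carrier_vec n \<and> (\<forall>i<n. w $ i \<le> (((*\<^sub>v) B ^^ k) w) $ i)" for k
  proof (induction k)
    case 0 thus ?case using w by simp
  next
    case (Suc k)
    have c: "(((*\<^sub>v) B ^^ Suc k) w) = B *\<^sub>v (((*\<^sub>v) B ^^ k) w)" by simp
    show ?case unfolding c
    proof (intro conjI allI impI)
      show "B *\<^sub>v ((*\<^sub>v) B ^^ k) w \<in> carrier_vec n" by (rule carrier_vecI) (use B in simp)
      fix i assume i: "i < n"
      have "w $ i \<le> (B *\<^sub>v w) $ i" by (rule Bw[OF i])
      also have "\<dots> \<le> (B *\<^sub>v (((*\<^sub>v) B ^^ k) w)) $ i"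
        by (rule mono_mv[OF B _ i w]) (use Suc Bnn i in auto)
      finally show "w $ i \<le> (B *\<^sub>v (((*\<^sub>v) B ^^ k) w)) $ i" .
    qed
  qed
  have "(\<lambda>k. (((*\<^sub>v) B ^^ k) w) $ i0) \<longlonglongrightarrow> 0" by (rule decay[OF B n rB w i0(1)])
  hence "w $ i0 \<le> 0" by (rule LIMSEQ_le_const) (use it i0 in auto)
  with i0 show False by simp
qed

lemma blk_carrier:
  "X \<in> carrier_mat n n \<Longrightarrow> four_block_mat X Y (1\<^sub>m n) (0\<^sub>m n n) \<in> carrier_mat (n+n) (n+n)"
  by (rule four_block_carrier_mat) auto

lemma blk_entry:
  fixes X Y :: "real mat"
  assumes X: "X \<in> carrier_mat n n" and Y: "Y \<in> carrier_mat n n" and i: "i < n+n" and j: "j < n+n"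
  shows "four_block_mat X Y (1\<^sub>m n) (0\<^sub>m n n) $$ (i,j) =
    (if i < n then if j < n then X $$ (i,j) else Y $$ (i, j - n) else if i - n = j then 1 else 0)"
  using X Y i j by auto

lemma blk_mv:
  fixes X Y :: "real mat"
  assumes X: "X \<in> carrier_mat n n" and Y: "Y \<in> carrier_mat n n"
    and u: "u \<in> carrier_vec n" and v: "v \<in> carrier_vec n"
  shows "four_block_mat X Y (1\<^sub>m n) (0\<^sub>m n n) *\<^sub>v (u @\<^sub>v v) = (X *\<^sub>v u + Y *\<^sub>v v) @\<^sub>v u"
proof -
  have z1: "1\<^sub>m n *\<^sub>v u = u" using u by simp
  have z0: "0\<^sub>m n n *\<^sub>v v = 0\<^sub>v n" by (rule eq_vecI) (use v in auto)
  have z: "1\<^sub>m n *\<^sub>v u + 0\<^sub>m n n *\<^sub>v v = u" unfolding z1 z0 using u by simp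
  show ?thesis by (subst four_block_mat_mult_vec[OF X Y _ _ u v]) (use u v z in auto)
qed



lemma pos_row:
  fixes Q M :: "real mat"
  assumes Q: "Q \<in> carrier_mat n n" and M: "M \<in> carrier_mat n n" and QM: "Q * M = 1\<^sub>m n"
    and nn: "\<And>i j. i < n \<Longrightarrow> j < n \<Longrightarrow> 0 \<le> Q $$ (i,j)" and i: "i < n"
  shows "0 < (Q *\<^sub>v vec n (\<lambda>_. 1)) $ i"
proof -
  have eq: "(Q *\<^sub>v vec n (\<lambda>_. 1)) $ i = (\<Sum>j<n. Q $$ (i,j))" using mv_nth[OF Q _ i, of "vec n (\<lambda>_. 1)"] by simp
  have ge: "0 \<le> (\<Sum>j<n. Q $$ (i,j))" using nn i by (auto intro: sum_nonneg)
  show ?thesis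
  proof (rule ccontr)
    assume "\<not> ?thesis"
    hence "(\<Sum>j<n. Q $$ (i,j)) = 0" using eq ge by simp
    hence z: "\<forall>j\<in>{..<n}. Q $$ (i,j) = 0" using nn i by (subst sum_nonneg_eq_0_iff[symmetric]) auto
    have "(Q * M) $$ (i,i) = (\<Sum>j<n. Q $$ (i,j) * M $$ (j,i))"
      using Q M i by (auto simp: scalar_prod_def atLeast0LessThan intro!: sum.cong)
    also have "\<dots> = 0" using z by simp
    finally show False using QM i by simp
  qed
qed

lemma split_apply:
  fixes A P R S Pi :: "real mat"
  assumes AS: "A = P - R + S" and P: "P \<in> carrier_mat n n" and R: "R \<in> carrier_mat n n"
    and S: "S \<in> carrier_mat n n" and Pi: "Pi \<in> carrier_mat n n" and PiP: "Pi * P = 1\<^sub>m n"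
    and u: "u \<in> carrier_vec n" and i: "i < n"
  shows "(Pi *\<^sub>v (A *\<^sub>v u)) $ i = u $ i - ((Pi * R) *\<^sub>v u) $ i + ((Pi * S) *\<^sub>v u) $ i"
proof -
  have "A *\<^sub>v u = (P - R) *\<^sub>v u + S *\<^sub>v u"
    unfolding AS by (rule add_mult_distrib_mat_vec) (use P R S u in auto)
  also have "(P - R) *\<^sub>v u = P *\<^sub>v u - R *\<^sub>v u" by (rule minus_mult_distrib_mat_vec[OF P R u])
  finally have "A *\<^sub>v u = P *\<^sub>v u - R *\<^sub>v u + S *\<^sub>v u" .
  hence "(Pi *\<^sub>v (A *\<^sub>v u)) = Pi *\<^sub>v (P *\<^sub>v u) - Pi *\<^sub>v (R *\<^sub>v u) + Pi *\<^sub>v (S *\<^sub>v u)"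
    using P R S u Pi by (simp add: mult_add_distrib_mat_vec[of _ n n] mult_minus_distrib_mat_vec[of _ n n])
  also have "Pi *\<^sub>v (P *\<^sub>v u) = u" using assoc_mult_mat_vec[OF Pi P u, symmetric] PiP u by simp
  also have "Pi *\<^sub>v (R *\<^sub>v u) = (Pi * R) *\<^sub>v u" using Pi R u by simp
  also have "Pi *\<^sub>v (S *\<^sub>v u) = (Pi * S) *\<^sub>v u" using Pi S u by simp
  finally show ?thesis using i u Pi R S by simp
qed

lemma mv_neg:
  fixes M :: "real mat"
  assumes M: "M \<in> carrier_mat n n" and u: "u \<in> carrier_vec n" and i: "i < n"
  shows "((- M) *\<^sub>v u) $ i = - ((M *\<^sub>v u) $ i)"
  using M u i by simp

lemma mv_smult:
  fixes M :: "real mat"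
  assumes M: "M \<in> carrier_mat n n" and u: "u \<in> carrier_vec n" and i: "i < n"
  shows "(M *\<^sub>v (c \<cdot>\<^sub>v u)) $ i = c * (M *\<^sub>v u) $ i"
  using M u i by (simp add: mult_mat_vec[OF M u])

lemma stepB:
  fixes A P R S Pi Ai :: "real mat"
  assumes n: "n > 0" and A: "A \<in> carrier_mat n n" and P: "P \<in> carrier_mat n n"
    and R: "R \<in> carrier_mat n n" and S: "S \<in> carrier_mat n n" and Pi: "Pi \<in> carrier_mat n n"
    and PiP: "Pi * P = 1\<^sub>m n" and Ai: "Ai \<in> carrier_mat n n" and AiA: "Ai * A = 1\<^sub>m n"
    and AAi: "A * Ai = 1\<^sub>m n"
    and Ainn: "\<And>i j. i < n \<Longrightarrow> j < n \<Longrightarrow> 0 \<le> Ai $$ (i,j)"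
    and Pinn: "\<And>i j. i < n \<Longrightarrow> j < n \<Longrightarrow> 0 \<le> Pi $$ (i,j)"
    and AS: "A = P - R + S"
    and Xnn: "\<And>i j. i < n \<Longrightarrow> j < n \<Longrightarrow> 0 \<le> (Pi * R) $$ (i,j)"
    and Snp: "\<And>i j. i < n \<Longrightarrow> j < n \<Longrightarrow> (Pi * S) $$ (i,j) \<le> 0"
  shows "rho (four_block_mat (Pi * R) (- (Pi * S)) (1\<^sub>m n) (0\<^sub>m n n)) < 1"
proof -
  define X where "X = Pi * R"
  define Y where "Y = - (Pi * S)"
  have X: "X \<in> carrier_mat n n" and Y: "Y \<in> carrier_mat n n" using Pi R S by (auto simp: X_def Y_def)
  have Xn: "\<And>i j. i < n \<Longrightarrow> j < n \<Longrightarrow> 0 \<le> X $$ (i,j)" using Xnn by (simp add: X_def)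
  have Yn: "\<And>i j. i < n \<Longrightarrow> j < n \<Longrightarrow> 0 \<le> Y $$ (i,j)" using Snp Pi S by (simp add: Y_def)
  define one where "one = vec n (\<lambda>_. 1::real)"
  have one: "one \<in> carrier_vec n" by (simp add: one_def)
  define u where "u = Ai *\<^sub>v one"
  have u: "u \<in> carrier_vec n" using Ai by (simp add: u_def carrier_vecI)
  have up: "\<And>i. i < n \<Longrightarrow> 0 < u $ i" unfolding u_def one_def by (rule pos_row[OF Ai A AiA Ainn])
  define v where "v = Pi *\<^sub>v one"
  have vp: "\<And>i. i < n \<Longrightarrow> 0 < v $ i" unfolding v_def one_def by (rule pos_row[OF Pi P PiP Pinn])
  have Au: "A *\<^sub>v u = one" unfolding u_def using assoc_mult_mat_vec[OF A Ai one, symmetric] AAi one by simp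
  have key: "(X *\<^sub>v u) $ i + (Y *\<^sub>v u) $ i = u $ i - v $ i" if i: "i < n" for i
  proof -
    have "v $ i = (Pi *\<^sub>v (A *\<^sub>v u)) $ i" unfolding Au v_def ..
    also have "\<dots> = u $ i - (X *\<^sub>v u) $ i + ((Pi * S) *\<^sub>v u) $ i"
      unfolding X_def by (rule split_apply[OF AS P R S Pi PiP u i])
    also have "((Pi * S) *\<^sub>v u) $ i = - (Y *\<^sub>v u) $ i" unfolding Y_def using Pi S u i by simp
    finally show ?thesis by simp
  qed
  define a where "a = (\<lambda>i. (u $ i - v $ i) / u $ i)"
  have a1: "\<And>i. i < n \<Longrightarrow> a i < 1" using up vp by (simp add: a_def field_simps)
  define m where "m = Max (a ` {..<n})"
  have am: "\<And>i. i < n \<Longrightarrow> a i \<le> m" unfolding m_def by (rule Max_ge) auto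
  have m1: "m < 1"
  proof -
    have "m \<in> a ` {..<n}" unfolding m_def by (rule Max_in) (use n in auto)
    thus ?thesis using a1 by auto
  qed
  define p where "p = max m 0"
  define c where "c = (1 + p) / 2"
  have c0: "0 < c" "c < 1" using m1 by (auto simp: c_def p_def)
  have pc: "p \<le> c * c"
  proof -
    have "c * c - p = (1 - p)^2 / 4" by (simp add: c_def power2_eq_square field_simps)
    thus ?thesis by (smt (verit) zero_le_power2 divide_nonneg_pos)
  qed
  have ac: "\<And>i. i < n \<Longrightarrow> a i \<le> c * c" using am pc by (smt (verit) p_def)
  define z where "z = u @\<^sub>v ((1/c) \<cdot>\<^sub>v u)"
  have z: "z \<in> carrier_vec (n+n)" using u by (simp add: z_def)
  have "rho (four_block_mat X Y (1\<^sub>m n) (0\<^sub>m n n)) \<le> c"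
  proof (rule rho_upper[OF blk_carrier[OF X] _ _ z])
    show "0 < n + n" using n by simp
    fix i j assume i: "i < n + n" and j: "j < n + n"
    show "0 \<le> four_block_mat X Y (1\<^sub>m n) (0\<^sub>m n n) $$ (i, j)"
      using blk_entry[OF X Y i j] Xn Yn i j by auto
  next
    fix i assume i: "i < n + n"
    show "0 < z $ i" using i up u c0 by (auto simp: z_def)
  next
    show "0 \<le> c" using c0 by simp
  next
    fix i assume i: "i < n + n"
    have bz: "four_block_mat X Y (1\<^sub>m n) (0\<^sub>m n n) *\<^sub>v z = (X *\<^sub>v u + Y *\<^sub>v ((1/c) \<cdot>\<^sub>v u)) @\<^sub>v u"
      unfolding z_def by (rule blk_mv[OF X Y u]) (use u in simp)
    show "(four_block_mat X Y (1\<^sub>m n) (0\<^sub>m n n) *\<^sub>v z) $ i \<le> c * z $ i"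
    proof (cases "i < n")
      case True
      have Xu0: "0 \<le> (X *\<^sub>v u) $ i" by (rule nonneg_mv[OF X _ True u]) (use Xn True up in \<open>auto intro: less_imp_le\<close>)
      have Yu0: "0 \<le> (Y *\<^sub>v u) $ i" by (rule nonneg_mv[OF Y _ True u]) (use Yn True up in \<open>auto intro: less_imp_le\<close>)
      have lhs: "(four_block_mat X Y (1\<^sub>m n) (0\<^sub>m n n) *\<^sub>v z) $ i = (X *\<^sub>v u) $ i + (1/c) * (Y *\<^sub>v u) $ i"
        unfolding bz using True X Y u mv_smult[OF Y u True] by simp
      have "c * (X *\<^sub>v u) $ i \<le> (X *\<^sub>v u) $ i" using Xu0 c0 by (simp add: mult_left_le_one_le)
      hence "(X *\<^sub>v u) $ i \<le> (1/c) * (X *\<^sub>v u) $ i" using c0 by (simp add: field_simps)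
      hence "(four_block_mat X Y (1\<^sub>m n) (0\<^sub>m n n) *\<^sub>v z) $ i \<le> (1/c) * (X *\<^sub>v u) $ i + (1/c) * (Y *\<^sub>v u) $ i"
        unfolding lhs by simp
      also have "\<dots> = (1/c) * ((X *\<^sub>v u) $ i + (Y *\<^sub>v u) $ i)" by (simp add: algebra_simps)
      also have "\<dots> = (1/c) * (u $ i - v $ i)" using key[OF True] by simp
      also have "u $ i - v $ i = a i * u $ i" using up[OF True] by (simp add: a_def)
      also have "(1/c) * (a i * u $ i) \<le> (1/c) * (c * c * u $ i)"
        using ac[OF True] up[OF True] c0 by (intro mult_left_mono mult_right_mono) auto
      also have "\<dots> = c * z $ i" using True u c0 by (simp add: z_def)
      finally show ?thesis .
    next
      case False
      hence "(four_block_mat X Y (1\<^sub>m n) (0\<^sub>m n n) *\<^sub>v z) $ i = u $ (i - n)" unfolding bz using i X Y u by simp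
      also have "\<dots> = c * z $ i" using False i u c0 by (simp add: z_def)
      finally show ?thesis by simp
    qed
  qed
  thus ?thesis using c0 unfolding X_def Y_def by simp
qed



lemma mv_comb:
  fixes X Y :: "real mat"
  assumes X: "X \<in> carrier_mat n n" and Y: "Y \<in> carrier_mat n n" and y: "y \<in> carrier_vec n" and i: "i < n"
  shows "((c \<cdot>\<^sub>m X + d \<cdot>\<^sub>m Y) *\<^sub>v y) $ i = c * (X *\<^sub>v y) $ i + d * (Y *\<^sub>v y) $ i"
proof -
  have M: "c \<cdot>\<^sub>m X + d \<cdot>\<^sub>m Y \<in> carrier_mat n n" using X Y by simp
  have "(\<Sum>j<n. (c \<cdot>\<^sub>m X + d \<cdot>\<^sub>m Y) $$ (i,j) * y $ j) = (\<Sum>j<n. c * (X $$ (i,j) * y $ j) + d * (Y $$ (i,j) * y $ j))"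
    by (rule sum.cong) (use X Y i in \<open>auto simp: algebra_simps\<close>)
  also have "\<dots> = c * (\<Sum>j<n. X $$ (i,j) * y $ j) + d * (\<Sum>j<n. Y $$ (i,j) * y $ j)"
    by (simp add: sum.distrib sum_distrib_left)
  finally show ?thesis unfolding mv_nth[OF M y i] mv_nth[OF X y i] mv_nth[OF Y y i] .
qed

lemma mv_uminus_vec:
  fixes M :: "real mat"
  assumes M: "M \<in> carrier_mat n n" and v: "v \<in> carrier_vec n" and i: "i < n"
  shows "(M *\<^sub>v (- v)) $ i = - (M *\<^sub>v v) $ i"
proof -
  have mv: "- v \<in> carrier_vec n" using v by simp
  show ?thesis unfolding mv_nth[OF M mv i] mv_nth[OF M v i] using v by (simp add: sum_negf[symmetric])
qed

lemma mono_mv2: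
  fixes M :: "real mat"
  assumes M: "M \<in> carrier_mat n n" and nn: "\<And>j. j < n \<Longrightarrow> 0 \<le> M $$ (i,j)" and i: "i < n"
    and a: "a \<in> carrier_vec n" and b: "b \<in> carrier_vec n" and x: "x \<in> carrier_vec n"
    and le: "\<And>j. j < n \<Longrightarrow> a $ j + b $ j \<le> x $ j"
  shows "(M *\<^sub>v a) $ i + (M *\<^sub>v b) $ i \<le> (M *\<^sub>v x) $ i"
proof -
  have "(M *\<^sub>v a) $ i + (M *\<^sub>v b) $ i = (\<Sum>j<n. M $$ (i,j) * (a $ j + b $ j))"
    unfolding mv_nth[OF M a i] mv_nth[OF M b i] by (simp add: sum.distrib algebra_simps)
  also have "\<dots> \<le> (\<Sum>j<n. M $$ (i,j) * x $ j)" by (rule sum_mono, rule mult_left_mono) (use nn le in auto)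
  finally show ?thesis unfolding mv_nth[OF M x i] .
qed

lemma mv_lin3:
  fixes M :: "real mat"
  assumes M: "M \<in> carrier_mat n n" and x: "x \<in> carrier_vec n" and p: "p \<in> carrier_vec n"
    and q: "q \<in> carrier_vec n" and i: "i < n"
  shows "(M *\<^sub>v (x - a \<cdot>\<^sub>v p + b \<cdot>\<^sub>v q)) $ i = (M *\<^sub>v x) $ i - a * (M *\<^sub>v p) $ i + b * (M *\<^sub>v q) $ i"
proof -
  have v: "x - a \<cdot>\<^sub>v p + b \<cdot>\<^sub>v q \<in> carrier_vec n" using x p q by simp
  have "(\<Sum>j<n. M $$ (i,j) * (x - a \<cdot>\<^sub>v p + b \<cdot>\<^sub>v q) $ j) = (\<Sum>j<n. M $$ (i,j) * x $ j - a * (M $$ (i,j) * p $ j) + b * (M $$ (i,j) * q $ j))"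
    by (rule sum.cong) (use x p q in \<open>auto simp: algebra_simps\<close>)
  also have "\<dots> = (\<Sum>j<n. M $$ (i,j) * x $ j) - a * (\<Sum>j<n. M $$ (i,j) * p $ j) + b * (\<Sum>j<n. M $$ (i,j) * q $ j)"
    by (simp add: sum.distrib sum_subtractf sum_distrib_left)
  finally show ?thesis unfolding mv_nth[OF M v i] mv_nth[OF M x i] mv_nth[OF M p i] mv_nth[OF M q i] .
qed



lemma stepC:
  fixes A P1 R1 S1 P1i P2 R2 S2 P2i :: "real mat" and s :: real
  assumes n: "n > 0" and A: "A \<in> carrier_mat n n"
    and P1: "P1 \<in> carrier_mat n n" and R1: "R1 \<in> carrier_mat n n" and S1: "S1 \<in> carrier_mat n n"
    and P1i: "P1i \<in> carrier_mat n n" and P2: "P2 \<in> carrier_mat n n" and R2: "R2 \<in> carrier_mat n n"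
    and S2: "S2 \<in> carrier_mat n n" and P2i: "P2i \<in> carrier_mat n n"
    and P1iP1: "P1i * P1 = 1\<^sub>m n" and P2iP2: "P2i * P2 = 1\<^sub>m n" and P2P2i: "P2 * P2i = 1\<^sub>m n"
    and AS1: "A = P1 - R1 + S1" and AS2: "A = P2 - R2 + S2"
    and P1inn: "\<And>i j. i < n \<Longrightarrow> j < n \<Longrightarrow> 0 \<le> P1i $$ (i,j)"
    and P2inn: "\<And>i j. i < n \<Longrightarrow> j < n \<Longrightarrow> 0 \<le> P2i $$ (i,j)"
    and R2nn: "\<And>i j. i < n \<Longrightarrow> j < n \<Longrightarrow> 0 \<le> R2 $$ (i,j)"
    and S2np: "\<And>i j. i < n \<Longrightarrow> j < n \<Longrightarrow> S2 $$ (i,j) \<le> 0"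
    and X1nn: "\<And>i j. i < n \<Longrightarrow> j < n \<Longrightarrow> 0 \<le> (P1i * R1) $$ (i,j)"
    and S1np: "\<And>i j. i < n \<Longrightarrow> j < n \<Longrightarrow> (P1i * S1) $$ (i,j) \<le> 0"
    and XY2: "\<And>i j. i < n \<Longrightarrow> j < n \<Longrightarrow> (P2i * R2) $$ (i,j) + (P2i * S2) $$ (i,j) \<le> 0"
    and s0: "0 < s" and s1: "s < 1"
    and rT2: "rho (four_block_mat (P2i * R2) (- (P2i * S2)) (1\<^sub>m n) (0\<^sub>m n n)) < s"
  shows "rho (four_block_mat (P2i * R2 * P1i * R1 - P2i * S2) (- (P2i * R2 * P1i * S1)) (1\<^sub>m n) (0\<^sub>m n n)) \<le> s"
proof -
  define X1 where "X1 = P1i * R1"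
  define X2 where "X2 = P2i * R2"
  define Y2 where "Y2 = - (P2i * S2)"
  have X1: "X1 \<in> carrier_mat n n" and X2: "X2 \<in> carrier_mat n n" and Y2: "Y2 \<in> carrier_mat n n"
    using P1i R1 P2i R2 S2 by (auto simp: X1_def X2_def Y2_def)
  have X1n: "\<And>i j. i < n \<Longrightarrow> j < n \<Longrightarrow> 0 \<le> X1 $$ (i,j)" using X1nn by (simp add: X1_def)
  have X2n: "\<And>i j. i < n \<Longrightarrow> j < n \<Longrightarrow> 0 \<le> X2 $$ (i,j)" unfolding X2_def
    by (rule mult_nonneg_entry[OF P2i R2]) (use P2inn R2nn in auto)
  have Y2n: "\<And>i j. i < n \<Longrightarrow> j < n \<Longrightarrow> 0 \<le> Y2 $$ (i,j)"
  proof -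
    fix i j assume "i < n" "j < n"
    moreover have "(P2i * S2) $$ (i,j) \<le> 0" if "i < n" "j < n"
      by (rule mult_nonpos_entry[OF P2i S2 that]) (use P2inn S2np that in auto)
    ultimately show "0 \<le> Y2 $$ (i,j)" using P2i S2 by (simp add: Y2_def)
  qed
  have XY: "\<And>i j. i < n \<Longrightarrow> j < n \<Longrightarrow> X2 $$ (i,j) \<le> Y2 $$ (i,j)"
    using XY2 P2i S2 by (fastforce simp: X2_def Y2_def)
  define T2 where "T2 = four_block_mat X2 Y2 (1\<^sub>m n) (0\<^sub>m n n)"
  have T2: "T2 \<in> carrier_mat (n+n) (n+n)" unfolding T2_def by (rule blk_carrier[OF X2])
  have T2n: "\<And>i j. i < n+n \<Longrightarrow> j < n+n \<Longrightarrow> 0 \<le> T2 $$ (i,j)"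
    unfolding T2_def using blk_entry[OF X2 Y2] X2n Y2n by auto
  have rT2': "rho T2 < s" using rT2 unfolding T2_def X2_def Y2_def .
  define B where "B = (1/s) \<cdot>\<^sub>m X2 + (1/s^2) \<cdot>\<^sub>m Y2"
  have B: "B \<in> carrier_mat n n" using X2 Y2 by (simp add: B_def)
  have Bn: "\<And>i j. i < n \<Longrightarrow> j < n \<Longrightarrow> 0 \<le> B $$ (i,j)"
    using X2n Y2n X2 Y2 s0 by (simp add: B_def)
  have Bv: "\<And>y i. y \<in> carrier_vec n \<Longrightarrow> i < n \<Longrightarrow> (B *\<^sub>v y) $ i = (1/s) * (X2 *\<^sub>v y) $ i + (1/s^2) * (Y2 *\<^sub>v y) $ i"
    unfolding B_def by (rule mv_comb[OF X2 Y2])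
  have rB: "rho B < 1"
  proof (rule ccontr)
    assume "\<not> rho B < 1" hence rB1: "1 \<le> rho B" by simp
    from perron_sub[OF B n Bn] obtain b where b: "b \<in> carrier_vec n" "\<And>i. i<n \<Longrightarrow> 0 \<le> b $ i"
      and bi0: "\<exists>i<n. 0 < b $ i" and Bb: "\<And>i. i<n \<Longrightarrow> rho B * b $ i \<le> (B *\<^sub>v b) $ i" by blast
    from bi0 obtain i0 where i0: "i0 < n" "0 < b $ i0" by blast
    define z where "z = b @\<^sub>v ((1/s) \<cdot>\<^sub>v b)"
    have z: "z \<in> carrier_vec (n+n)" using b by (simp add: z_def)
    have Tz: "T2 *\<^sub>v z = (X2 *\<^sub>v b + Y2 *\<^sub>v ((1/s) \<cdot>\<^sub>v b)) @\<^sub>v b"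
      unfolding T2_def z_def by (rule blk_mv[OF X2 Y2 b(1)]) (use b in simp)
    have "s \<le> rho T2"
    proof (rule rho_lower[OF T2 _ T2n z])
      show "0 < n + n" using n by simp
      show "i0 < n + n" using i0 by simp
      show "0 < z $ i0" using i0 b by (simp add: z_def)
      show "0 < s" by (rule s0)
    next
      fix i assume i: "i < n + n"
      show "0 \<le> z $ i" using i b s0 by (auto simp: z_def)
    next
      fix i assume i: "i < n + n"
      show "s * z $ i \<le> (T2 *\<^sub>v z) $ i"
      proof (cases "i < n")
        case True
        have "s * z $ i = s * b $ i" using True b by (simp add: z_def)
        also have "\<dots> \<le> s * (rho B * b $ i)" using rB1 b(2)[OF True] s0
          by (intro mult_left_mono) (auto simp: mult_le_cancel_right1)
        also have "\<dots> \<le> s * (B *\<^sub>v b) $ i" using Bb[OF True] s0 by simp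
        also have "\<dots> = (X2 *\<^sub>v b) $ i + (1/s) * (Y2 *\<^sub>v b) $ i"
          using Bv[OF b(1) True] s0 by (simp add: field_simps power2_eq_square)
        also have "\<dots> = (T2 *\<^sub>v z) $ i" unfolding Tz using True b X2 Y2 mv_smult[OF Y2 b(1) True] by simp
        finally show ?thesis .
      next
        case False
        thus ?thesis unfolding Tz using i b s0 X2 Y2 by (simp add: z_def)
      qed
    qed
    with rT2' show False by simp
  qed
  define one where "one = vec n (\<lambda>_. 1::real)"
  have one: "one \<in> carrier_vec n" by (simp add: one_def)
  define g where "g = P2i *\<^sub>v one"
  have g: "g \<in> carrier_vec n" using P2i by (simp add: g_def carrier_vecI)
  have gp: "\<And>i. i < n \<Longrightarrow> 0 < g $ i" unfolding g_def one_def by (rule pos_row[OF P2i P2 P2iP2 P2inn])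
  have P2g: "P2 *\<^sub>v g = one" unfolding g_def using assoc_mult_mat_vec[OF P2 P2i one, symmetric] P2P2i one by simp
  define e where "e = (\<lambda>k. (((*\<^sub>v) B) ^^ k) g)"
  have eS: "\<And>k. e (Suc k) = B *\<^sub>v e k" by (simp add: e_def)
  have ec: "\<And>k. e k \<in> carrier_vec n \<and> (\<forall>i<n. 0 \<le> e k $ i)"
  proof -
    fix k show "e k \<in> carrier_vec n \<and> (\<forall>i<n. 0 \<le> e k $ i)"
    proof (induction k)
      case 0 thus ?case using g gp by (auto simp: e_def intro: less_imp_le)
    next
      case (Suc k)
      show ?case unfolding eS
      proof (intro conjI allI impI)
        show "B *\<^sub>v e k \<in> carrier_vec n" by (rule carrier_vecI) (use B in simp)
        fix i assume i: "i < n"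
        show "0 \<le> (B *\<^sub>v e k) $ i" by (rule nonneg_mv[OF B _ i]) (use Suc Bn i in auto)
      qed
    qed
  qed
  have ecar: "\<And>k. e k \<in> carrier_vec n" using ec by blast
  have enn: "\<And>k i. i < n \<Longrightarrow> 0 \<le> e k $ i" using ec by blast
  have elim: "\<And>i. i < n \<Longrightarrow> (\<lambda>k. e k $ i) \<longlonglongrightarrow> 0" unfolding e_def by (rule decay[OF B n rB g])
  have Pelim: "(\<lambda>k. (P2 *\<^sub>v e k) $ i) \<longlonglongrightarrow> 0" if i: "i < n" for i
  proof -
    have "(\<lambda>k. (\<Sum>j<n. P2 $$ (i,j) * e k $ j)) \<longlonglongrightarrow> 0"
      by (rule tendsto_null_sum) (use elim in \<open>auto intro: tendsto_mult_right_zero\<close>)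
    moreover have "\<And>k. (P2 *\<^sub>v e k) $ i = (\<Sum>j<n. P2 $$ (i,j) * e k $ j)" by (rule mv_nth[OF P2 ecar i])
    ultimately show ?thesis by simp
  qed
  have "eventually (\<lambda>k. \<forall>i\<in>{..<n}. e k $ i < g $ i \<and> (P2 *\<^sub>v e k) $ i < 1) sequentially"
  proof (rule eventually_ball_finite, simp, intro ballI)
    fix i assume "i \<in> {..<n}" hence i: "i < n" by simp
    have "eventually (\<lambda>k. e k $ i < g $ i) sequentially" by (rule order_tendstoD(2)[OF elim[OF i] gp[OF i]])
    moreover have "eventually (\<lambda>k. (P2 *\<^sub>v e k) $ i < 1) sequentially" by (rule order_tendstoD(2)[OF Pelim[OF i]]) simp
    ultimately show "eventually (\<lambda>k. e k $ i < g $ i \<and> (P2 *\<^sub>v e k) $ i < 1) sequentially"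
      by (rule eventually_conj)
  qed
  then obtain m where mprop: "\<And>i. i < n \<Longrightarrow> e m $ i < g $ i \<and> (P2 *\<^sub>v e m) $ i < 1"
    unfolding eventually_sequentially by blast
  define x where "x = vec n (\<lambda>i. \<Sum>k<m. e k $ i)"
  have x: "x \<in> carrier_vec n" by (simp add: x_def)
  have xnn: "\<And>i. i < n \<Longrightarrow> 0 \<le> x $ i" using enn by (auto simp: x_def intro: sum_nonneg)
  have Bx: "(B *\<^sub>v x) $ i = (\<Sum>k<m. e (Suc k) $ i)" if i: "i < n" for i
  proof -
    have "(B *\<^sub>v x) $ i = (\<Sum>j<n. B $$ (i,j) * (\<Sum>k<m. e k $ j))" using mv_nth[OF B x i] by (simp add: x_def)
    also have "\<dots> = (\<Sum>k<m. \<Sum>j<n. B $$ (i,j) * e k $ j)" by (simp add: sum_distrib_left sum.swap[of _ "{..<n}"])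
    also have "\<dots> = (\<Sum>k<m. e (Suc k) $ i)" unfolding eS using mv_nth[OF B ecar i] by simp
    finally show ?thesis .
  qed
  have dx: "x $ i - (B *\<^sub>v x) $ i = g $ i - e m $ i" if i: "i < n" for i
  proof -
    have "x $ i - (B *\<^sub>v x) $ i = (\<Sum>k<m. e k $ i - e (Suc k) $ i)"
      unfolding Bx[OF i] using i by (simp add: x_def sum_subtractf)
    also have "\<dots> = e 0 $ i - e m $ i" by (rule sum_lessThan_telescope')
    finally show ?thesis by (simp add: e_def)
  qed
  have Bxnn: "\<And>i. i < n \<Longrightarrow> 0 \<le> (B *\<^sub>v x) $ i" by (rule nonneg_mv[OF B _ _ x]) (use Bn xnn in auto)
  have xpos: "\<And>i. i < n \<Longrightarrow> 0 < x $ i" using dx Bxnn mprop by (smt (verit))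
  define rx where "rx = R2 *\<^sub>v x"
  define sx where "sx = S2 *\<^sub>v x"
  have rx: "rx \<in> carrier_vec n" and sx: "sx \<in> carrier_vec n" using R2 S2 by (auto simp: rx_def sx_def intro: carrier_vecI)
  have rxn: "\<And>i. i < n \<Longrightarrow> 0 \<le> rx $ i" unfolding rx_def by (rule nonneg_mv[OF R2 _ _ x]) (use R2nn xnn in auto)
  have sxn: "sx $ i \<le> 0" if i: "i < n" for i
  proof -
    have "sx $ i = (\<Sum>j<n. S2 $$ (i,j) * x $ j)" unfolding sx_def by (rule mv_nth[OF S2 x i])
    also have "\<dots> \<le> 0" by (rule sum_nonpos) (use S2np xnn i in \<open>auto intro: mult_nonpos_nonneg\<close>)
    finally show ?thesis .
  qed
  define p where "p = P2i *\<^sub>v rx"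
  define q where "q = P2i *\<^sub>v sx"
  have p: "p \<in> carrier_vec n" and q: "q \<in> carrier_vec n" using P2i by (auto simp: p_def q_def intro: carrier_vecI)
  have X2x: "X2 *\<^sub>v x = p" unfolding X2_def p_def rx_def using P2i R2 x by simp
  have Y2x: "\<And>i. i < n \<Longrightarrow> (Y2 *\<^sub>v x) $ i = - q $ i" unfolding Y2_def q_def sx_def using P2i S2 x by simp
  define dv where "dv = x - (1/s) \<cdot>\<^sub>v p + (1/s^2) \<cdot>\<^sub>v q"
  have dv_eq: "dv = g - e m"
  proof (rule eq_vecI)
    fix i assume "i < dim_vec (g - e m)"
    hence i: "i < n" using ecar[of m] by simp
    have "dv $ i = x $ i - (B *\<^sub>v x) $ i" using Bv[OF x i] X2x Y2x[OF i] x p q i by (simp add: dv_def)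
    thus "dv $ i = (g - e m) $ i" using dx[OF i] i g ecar[of m] by simp
  qed (use x p q g ecar[of m] in \<open>auto simp: dv_def\<close>)
  have P2p: "P2 *\<^sub>v p = rx" unfolding p_def using assoc_mult_mat_vec[OF P2 P2i rx, symmetric] P2P2i rx by simp
  have P2q: "P2 *\<^sub>v q = sx" unfolding q_def using assoc_mult_mat_vec[OF P2 P2i sx, symmetric] P2P2i sx by simp
  have P2dv: "(P2 *\<^sub>v dv) $ i = (P2 *\<^sub>v x) $ i - (1/s) * rx $ i + (1/s^2) * sx $ i" if i: "i < n" for i
    unfolding dv_def mv_lin3[OF P2 x p q i] P2p P2q ..
  have P2dv2: "(P2 *\<^sub>v dv) $ i = 1 - (P2 *\<^sub>v e m) $ i" if i: "i < n" for i
  proof -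
    have "P2 *\<^sub>v dv = P2 *\<^sub>v g - P2 *\<^sub>v e m" unfolding dv_eq by (rule mult_minus_distrib_mat_vec[OF P2 g ecar])
    thus ?thesis using i P2 g ecar P2g by (simp add: one_def)
  qed
  have Ax_eq: "(A *\<^sub>v x) $ i = (P2 *\<^sub>v x) $ i - rx $ i + sx $ i" if i: "i < n" for i
  proof -
    have "A *\<^sub>v x = (P2 - R2) *\<^sub>v x + S2 *\<^sub>v x"
      unfolding AS2 by (rule add_mult_distrib_mat_vec) (use P2 R2 S2 x in auto)
    also have "(P2 - R2) *\<^sub>v x = P2 *\<^sub>v x - R2 *\<^sub>v x" by (rule minus_mult_distrib_mat_vec[OF P2 R2 x])
    finally show ?thesis using i P2 R2 S2 x by (simp add: rx_def sx_def)
  qed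
  have Axp: "0 \<le> (A *\<^sub>v x) $ i" if i: "i < n" for i
  proof -
    have e1: "(A *\<^sub>v x) $ i = (1 - (P2 *\<^sub>v e m) $ i) + (1/s - 1) * rx $ i + (1 - 1/s^2) * sx $ i"
      using Ax_eq[OF i] P2dv[OF i] P2dv2[OF i] by (simp add: algebra_simps)
    have "0 \<le> 1 - (P2 *\<^sub>v e m) $ i" using mprop[OF i] by simp
    moreover have "0 \<le> (1/s - 1) * rx $ i" using s0 s1 rxn[OF i] by (intro mult_nonneg_nonneg) (auto simp: field_simps)
    moreover have "1/s^2 \<ge> 1" using s0 s1 by (simp add: field_simps power_le_one)
    hence "0 \<le> (1 - 1/s^2) * sx $ i" using sxn[OF i] by (intro mult_nonpos_nonpos) auto
    ultimately show ?thesis unfolding e1 by simp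
  qed
  have Ax: "A *\<^sub>v x \<in> carrier_vec n" using A by (auto intro: carrier_vecI)
  define a where "a = X1 *\<^sub>v x"
  define bb where "bb = (- (P1i * S1)) *\<^sub>v x"
  have a: "a \<in> carrier_vec n" and bb: "bb \<in> carrier_vec n" using X1 P1i S1 by (auto simp: a_def bb_def intro: carrier_vecI)
  have an: "\<And>i. i < n \<Longrightarrow> 0 \<le> a $ i" unfolding a_def by (rule nonneg_mv[OF X1 _ _ x]) (use X1n xnn in auto)
  have bbn: "\<And>i. i < n \<Longrightarrow> 0 \<le> bb $ i" unfolding bb_def
    by (rule nonneg_mv[OF _ _ _ x]) (use P1i S1 S1np xnn in auto)
  have abx: "a $ i + bb $ i \<le> x $ i" if i: "i < n" for i
  proof -
    have "0 \<le> (P1i *\<^sub>v (A *\<^sub>v x)) $ i" by (rule nonneg_mv[OF P1i _ i Ax]) (use P1inn Axp i in auto)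
    also have "\<dots> = x $ i - (X1 *\<^sub>v x) $ i + ((P1i * S1) *\<^sub>v x) $ i"
      unfolding X1_def by (rule split_apply[OF AS1 P1 R1 S1 P1i P1iP1 x i])
    also have "((P1i * S1) *\<^sub>v x) $ i = - bb $ i" unfolding bb_def using P1i S1 x i by simp
    finally show ?thesis by (simp add: a_def)
  qed
  have bbx: "\<And>i. i < n \<Longrightarrow> bb $ i \<le> x $ i" using abx an by smt
  define W1 where "W1 = P2i * R2 * P1i * R1 - P2i * S2"
  define W2 where "W2 = - (P2i * R2 * P1i * S1)"
  have W1: "W1 \<in> carrier_mat n n" and W2: "W2 \<in> carrier_mat n n"
    using P2i R2 P1i R1 S1 S2 by (auto simp: W1_def W2_def)
  have asW1: "P2i * R2 * P1i * R1 = X2 * X1" unfolding X2_def X1_def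
    using assoc_mult_mat[of "P2i * R2" n n P1i n R1 n] P2i R2 P1i R1 by simp
  have asW2: "P2i * R2 * P1i * S1 = X2 * (P1i * S1)" unfolding X2_def
    using assoc_mult_mat[of "P2i * R2" n n P1i n S1 n] P2i R2 P1i S1 by simp
  have W1n: "0 \<le> W1 $$ (i,j)" if i: "i < n" and j: "j < n" for i j
  proof -
    have "0 \<le> (X2 * X1) $$ (i,j)" by (rule mult_nonneg_entry[OF X2 X1 i j]) (use X2n X1n i j in auto)
    moreover have "0 \<le> Y2 $$ (i,j)" by (rule Y2n[OF i j])
    ultimately show ?thesis unfolding W1_def asW1 using i j X2 X1 P2i S2 by (simp add: Y2_def)
  qed
  have W2n: "0 \<le> W2 $$ (i,j)" if i: "i < n" and j: "j < n" for i j
  proof -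
    have "(X2 * (P1i * S1)) $$ (i,j) \<le> 0" by (rule mult_nonpos_entry[OF X2 _ i j]) (use X2n S1np P1i S1 i j in auto)
    thus ?thesis unfolding W2_def asW2 using i j X2 P1i S1 by simp
  qed
  define W where "W = four_block_mat W1 W2 (1\<^sub>m n) (0\<^sub>m n n)"
  have Wc: "W \<in> carrier_mat (n+n) (n+n)" unfolding W_def by (rule blk_carrier[OF W1])
  define z where "z = x @\<^sub>v ((1/s) \<cdot>\<^sub>v x)"
  have z: "z \<in> carrier_vec (n+n)" using x by (simp add: z_def)
  have Wz: "W *\<^sub>v z = (W1 *\<^sub>v x + W2 *\<^sub>v ((1/s) \<cdot>\<^sub>v x)) @\<^sub>v x"
    unfolding W_def z_def by (rule blk_mv[OF W1 W2 x]) (use x in simp)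
  have W1x: "(W1 *\<^sub>v x) $ i = (X2 *\<^sub>v a) $ i + (Y2 *\<^sub>v x) $ i" if i: "i < n" for i
  proof -
    have "W1 *\<^sub>v x = (P2i * R2 * P1i * R1) *\<^sub>v x - (P2i * S2) *\<^sub>v x" unfolding W1_def
      by (rule minus_mult_distrib_mat_vec) (use P2i R2 P1i R1 S2 x in auto)
    moreover have "(P2i * R2 * P1i * R1) *\<^sub>v x = X2 *\<^sub>v a" unfolding asW1 a_def using X2 X1 x by simp
    ultimately show ?thesis using i X2 a P2i S2 x by (simp add: Y2_def)
  qed
  have W2x: "(W2 *\<^sub>v ((1/s) \<cdot>\<^sub>v x)) $ i = (1/s) * (X2 *\<^sub>v bb) $ i" if i: "i < n" for i
  proof -
    have PS: "P1i * S1 \<in> carrier_mat n n" using P1i S1 by simp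
    have "(W2 *\<^sub>v ((1/s) \<cdot>\<^sub>v x)) $ i = - ((X2 * (P1i * S1)) *\<^sub>v ((1/s) \<cdot>\<^sub>v x)) $ i"
      unfolding W2_def asW2 by (rule mv_neg[OF _ _ i]) (use X2 PS x in auto)
    also have "(X2 * (P1i * S1)) *\<^sub>v ((1/s) \<cdot>\<^sub>v x) = X2 *\<^sub>v ((1/s) \<cdot>\<^sub>v ((P1i * S1) *\<^sub>v x))"
      using X2 PS x by (simp add: mult_mat_vec[OF PS x])
    also have "(X2 *\<^sub>v ((1/s) \<cdot>\<^sub>v ((P1i * S1) *\<^sub>v x))) $ i = (1/s) * (X2 *\<^sub>v ((P1i * S1) *\<^sub>v x)) $ i"
      by (rule mv_smult[OF X2 _ i]) (use PS x in \<open>auto intro: carrier_vecI\<close>)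
    finally have F1: "(W2 *\<^sub>v ((1/s) \<cdot>\<^sub>v x)) $ i = - ((1/s) * (X2 *\<^sub>v ((P1i * S1) *\<^sub>v x)) $ i)" .
    have "bb = - ((P1i * S1) *\<^sub>v x)" unfolding bb_def by (rule uminus_mult_mat_vec) (use PS x in auto)
    hence "(X2 *\<^sub>v bb) $ i = - (X2 *\<^sub>v ((P1i * S1) *\<^sub>v x)) $ i"
      using mv_uminus_vec[OF X2 _ i, of "(P1i * S1) *\<^sub>v x"] PS x by (auto intro: carrier_vecI)
    thus ?thesis using F1 by simp
  qed
  have "rho W \<le> s"
  proof (rule rho_upper[OF Wc _ _ z])
    show "0 < n + n" using n by simp
    show "0 \<le> s" using s0 by simp
  next
    fix i j assume i: "i < n + n" and j: "j < n + n"
    show "0 \<le> W $$ (i, j)" unfolding W_def using blk_entry[OF W1 W2 i j] W1n W2n i j by auto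
  next
    fix i assume i: "i < n + n"
    show "0 < z $ i" using i xpos x s0 by (auto simp: z_def)
  next
    fix i assume i: "i < n + n"
    show "(W *\<^sub>v z) $ i \<le> s * z $ i"
    proof (cases "i < n")
      case True
      have lhs: "(W *\<^sub>v z) $ i = (X2 *\<^sub>v a) $ i + (Y2 *\<^sub>v x) $ i + (1/s) * (X2 *\<^sub>v bb) $ i"
        unfolding Wz using True W1 W2 x W1x[OF True] W2x[OF True] by simp
      have h1: "(X2 *\<^sub>v a) $ i + (X2 *\<^sub>v bb) $ i \<le> (X2 *\<^sub>v x) $ i"
        by (rule mono_mv2[OF X2 _ True a bb x]) (use X2n True abx in auto)
      have h2: "(X2 *\<^sub>v bb) $ i \<le> (X2 *\<^sub>v x) $ i"
        by (rule mono_mv[OF X2 _ True bb x]) (use X2n True bbx in auto)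
      have h3: "(X2 *\<^sub>v x) $ i \<le> (Y2 *\<^sub>v x) $ i"
        by (rule le_mat_mv[OF X2 Y2 _ True x]) (use XY True xnn in auto)
      have h4: "(X2 *\<^sub>v x) $ i + (1/s) * (Y2 *\<^sub>v x) $ i \<le> s * x $ i"
      proof -
        have "(X2 *\<^sub>v x) $ i + (1/s) * (Y2 *\<^sub>v x) $ i = s * (B *\<^sub>v x) $ i"
          using Bv[OF x True] s0 by (simp add: field_simps power2_eq_square)
        also have "\<dots> \<le> s * x $ i" using dx[OF True] mprop[OF True] s0 by (intro mult_left_mono) auto
        finally show ?thesis .
      qed
      have X2bn: "0 \<le> (X2 *\<^sub>v bb) $ i" by (rule nonneg_mv[OF X2 _ True bb]) (use X2n True bbn in auto)
      have "s * (W *\<^sub>v z) $ i = s * ((X2 *\<^sub>v a) $ i + (X2 *\<^sub>v bb) $ i) + (1 - s) * (X2 *\<^sub>v bb) $ i + s * (Y2 *\<^sub>v x) $ i"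
        unfolding lhs using s0 by (simp add: field_simps)
      also have "\<dots> \<le> s * (X2 *\<^sub>v x) $ i + (1 - s) * (Y2 *\<^sub>v x) $ i + s * (Y2 *\<^sub>v x) $ i"
        using h1 h2 h3 s0 s1 by (intro add_mono mult_left_mono order_refl) auto
      also have "\<dots> = s * ((X2 *\<^sub>v x) $ i + (1/s) * (Y2 *\<^sub>v x) $ i)" using s0 by (simp add: field_simps)
      also have "\<dots> \<le> s * (s * x $ i)" using h4 s0 by (intro mult_left_mono) auto
      finally have "s * (W *\<^sub>v z) $ i \<le> s * (s * z $ i)" using True x by (simp add: z_def)
      thus ?thesis using s0 by (simp add: mult_le_cancel_left_pos)
    next
      case False
      thus ?thesis unfolding Wz using i x s0 W1 W2 by (simp add: z_def)
    qed
  qed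
  thus ?thesis unfolding W_def W1_def W2_def .
qed



theorem corollary3p18:
  fixes n :: nat and A P1 R1 S1 P2 R2 S2 P1i P2i :: "real mat"
  assumes "n > 0"
    and "A \<in> carrier_mat n n"
    and "monotone_mat n A"
    and "double_weak_regular_splitting n A P1 R1 S1 P1i"
    and "double_regular_splitting n A P2 R2 S2 P2i"
    and "- 1 \<notin> rspectrum (R2 * P1i)"
    and "monotone_mat n ((1\<^sub>m n + R2 * P1i) * A)"
    and "P1i * R1 \<ge> P2i * R2"
    and "P2i * S2 \<ge> P1i * S1"
    and "P2i * R2 + P2i * S2 \<le> 0\<^sub>m n n"
  shows "rho (four_block_mat (P2i * R2 * P1i * R1 - P2i * S2) (- (P2i * R2 * P1i * S1)) (1\<^sub>m n) (0\<^sub>m n n))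
           \<le> min (rho (four_block_mat (P1i * R1) (- (P1i * S1)) (1\<^sub>m n) (0\<^sub>m n n)))
                  (rho (four_block_mat (P2i * R2) (- (P2i * S2)) (1\<^sub>m n) (0\<^sub>m n n)))
       \<and> min (rho (four_block_mat (P1i * R1) (- (P1i * S1)) (1\<^sub>m n) (0\<^sub>m n n)))
              (rho (four_block_mat (P2i * R2) (- (P2i * S2)) (1\<^sub>m n) (0\<^sub>m n n))) < 1"
proof -
  note n = assms(1) and A = assms(2)
  from assms(3) obtain Ai where Ainv: "is_inverse_mat n A Ai" and Ainn0: "0\<^sub>m n n \<le> Ai"
    unfolding monotone_mat_def by blast
  from Ainv have Ai: "Ai \<in> carrier_mat n n" and AAi: "A * Ai = 1\<^sub>m n" and AiA: "Ai * A = 1\<^sub>m n"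
    unfolding is_inverse_mat_def by auto
  have Ainn: "\<And>i j. i < n \<Longrightarrow> j < n \<Longrightarrow> 0 \<le> Ai $$ (i,j)" using nonneg_entry[OF Ainn0] by blast
  from assms(4) have R1: "R1 \<in> carrier_mat n n" and S1: "S1 \<in> carrier_mat n n"
    and P1inv: "is_inverse_mat n P1 P1i" and AS1: "A = P1 - R1 + S1" and P1inn0: "0\<^sub>m n n \<le> P1i"
    and X1nn0: "0\<^sub>m n n \<le> P1i * R1" and S1np0: "P1i * S1 \<le> 0\<^sub>m n n"
    unfolding double_weak_regular_splitting_def by auto
  from P1inv have P1: "P1 \<in> carrier_mat n n" and P1i: "P1i \<in> carrier_mat n n"
    and P1iP1: "P1i * P1 = 1\<^sub>m n" unfolding is_inverse_mat_def by auto
  from assms(5) have R2: "R2 \<in> carrier_mat n n" and S2: "S2 \<in> carrier_mat n n"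
    and P2inv: "is_inverse_mat n P2 P2i" and AS2: "A = P2 - R2 + S2" and P2inn0: "0\<^sub>m n n \<le> P2i"
    and R2nn0: "0\<^sub>m n n \<le> R2" and S2np0: "S2 \<le> 0\<^sub>m n n"
    unfolding double_regular_splitting_def by auto
  from P2inv have P2: "P2 \<in> carrier_mat n n" and P2i: "P2i \<in> carrier_mat n n"
    and P2iP2: "P2i * P2 = 1\<^sub>m n" and P2P2i: "P2 * P2i = 1\<^sub>m n" unfolding is_inverse_mat_def by auto
  have zc: "0\<^sub>m n n \<in> carrier_mat n n" by simp
  have P1inn: "\<And>i j. i < n \<Longrightarrow> j < n \<Longrightarrow> 0 \<le> P1i $$ (i,j)" using nonneg_entry[OF P1inn0] by blast
  have P2inn: "\<And>i j. i < n \<Longrightarrow> j < n \<Longrightarrow> 0 \<le> P2i $$ (i,j)" using nonneg_entry[OF P2inn0] by blast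
  have R2nn: "\<And>i j. i < n \<Longrightarrow> j < n \<Longrightarrow> 0 \<le> R2 $$ (i,j)" using nonneg_entry[OF R2nn0] by blast
  have X1nn: "\<And>i j. i < n \<Longrightarrow> j < n \<Longrightarrow> 0 \<le> (P1i * R1) $$ (i,j)" using nonneg_entry[OF X1nn0] by blast
  have S2np: "\<And>i j. i < n \<Longrightarrow> j < n \<Longrightarrow> S2 $$ (i,j) \<le> 0"
    using le_entry[OF S2np0 zc] by simp
  have S1np: "\<And>i j. i < n \<Longrightarrow> j < n \<Longrightarrow> (P1i * S1) $$ (i,j) \<le> 0"
    using le_entry[OF S1np0 zc] by simp
  have X2nn: "\<And>i j. i < n \<Longrightarrow> j < n \<Longrightarrow> 0 \<le> (P2i * R2) $$ (i,j)"
    by (rule mult_nonneg_entry[OF P2i R2]) (use P2inn R2nn in auto)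
  have S2np': "\<And>i j. i < n \<Longrightarrow> j < n \<Longrightarrow> (P2i * S2) $$ (i,j) \<le> 0"
    by (rule mult_nonpos_entry[OF P2i S2]) (use P2inn S2np in auto)
  have X12: "\<And>i j. i < n \<Longrightarrow> j < n \<Longrightarrow> (P2i * R2) $$ (i,j) \<le> (P1i * R1) $$ (i,j)"
    using le_entry[OF assms(8)] P1i R1 by (meson mult_carrier_mat)
  have S12: "\<And>i j. i < n \<Longrightarrow> j < n \<Longrightarrow> (P1i * S1) $$ (i,j) \<le> (P2i * S2) $$ (i,j)"
    using le_entry[OF assms(9)] P2i S2 by (meson mult_carrier_mat)
  have XY2: "\<And>i j. i < n \<Longrightarrow> j < n \<Longrightarrow> (P2i * R2) $$ (i,j) + (P2i * S2) $$ (i,j) \<le> 0"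
  proof -
    fix i j assume i: "i < n" and j: "j < n"
    have "(P2i * R2 + P2i * S2) $$ (i,j) \<le> 0" using le_entry[OF assms(10) zc i j] i j by simp
    thus "(P2i * R2) $$ (i,j) + (P2i * S2) $$ (i,j) \<le> 0" using i j P2i R2 S2 by simp
  qed
  define T1 where "T1 = four_block_mat (P1i * R1) (- (P1i * S1)) (1\<^sub>m n) (0\<^sub>m n n)"
  define T2 where "T2 = four_block_mat (P2i * R2) (- (P2i * S2)) (1\<^sub>m n) (0\<^sub>m n n)"
  define W where "W = four_block_mat (P2i * R2 * P1i * R1 - P2i * S2) (- (P2i * R2 * P1i * S1)) (1\<^sub>m n) (0\<^sub>m n n)"
  have X1c: "P1i * R1 \<in> carrier_mat n n" and Y1c: "- (P1i * S1) \<in> carrier_mat n n"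
    and X2c: "P2i * R2 \<in> carrier_mat n n" and Y2c: "- (P2i * S2) \<in> carrier_mat n n"
    using P1i R1 S1 P2i R2 S2 by auto
  have T1c: "T1 \<in> carrier_mat (n+n) (n+n)" unfolding T1_def by (rule blk_carrier[OF X1c])
  have T2c: "T2 \<in> carrier_mat (n+n) (n+n)" unfolding T2_def by (rule blk_carrier[OF X2c])
  have nn2: "0 < n + n" using n by simp
  have T1n: "\<And>i j. i < n+n \<Longrightarrow> j < n+n \<Longrightarrow> 0 \<le> T1 $$ (i,j)"
    unfolding T1_def using blk_entry[OF X1c Y1c] X1nn S1np P1i S1 by fastforce
  have T2n: "\<And>i j. i < n+n \<Longrightarrow> j < n+n \<Longrightarrow> 0 \<le> T2 $$ (i,j)"
    unfolding T2_def using blk_entry[OF X2c Y2c] X2nn S2np' P2i S2 by fastforce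
  have T12: "\<And>i j. i < n+n \<Longrightarrow> j < n+n \<Longrightarrow> T2 $$ (i,j) \<le> T1 $$ (i,j)"
    unfolding T1_def T2_def using blk_entry[OF X1c Y1c] blk_entry[OF X2c Y2c] X12 S12 P1i S1 P2i S2
    by fastforce
  have r2: "rho T2 < 1" unfolding T2_def
    by (rule stepB[OF n A P2 R2 S2 P2i P2iP2 Ai AiA AAi Ainn P2inn AS2 X2nn S2np'])
  have r0: "0 \<le> rho T2" by (rule rho_nonneg[OF T2c nn2])
  have r21: "rho T2 \<le> rho T1"
  proof (cases "rho T2 = 0")
    case True thus ?thesis using rho_nonneg[OF T1c nn2] by simp
  next
    case False
    hence rp: "0 < rho T2" using r0 by simp
    from perron_sub[OF T2c nn2 T2n] obtain w where w: "w \<in> carrier_vec (n+n)" "\<And>i. i<n+n \<Longrightarrow> 0 \<le> w $ i"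
      and wi0: "\<exists>i<n+n. 0 < w $ i" and Tw: "\<And>i. i<n+n \<Longrightarrow> rho T2 * w $ i \<le> (T2 *\<^sub>v w) $ i" by blast
    from wi0 obtain i0 where i0: "i0 < n+n" "0 < w $ i0" by blast
    show ?thesis
    proof (rule rho_lower[OF T1c nn2 T1n w(1) w(2) i0 rp])
      fix i assume i: "i < n + n"
      have "(T2 *\<^sub>v w) $ i \<le> (T1 *\<^sub>v w) $ i"
        by (rule le_mat_mv[OF T2c T1c _ i w(1)]) (use T12 i w(2) in auto)
      thus "rho T2 * w $ i \<le> (T1 *\<^sub>v w) $ i" using Tw[OF i] by simp
    qed
  qed
  have rW: "rho W \<le> rho T2"
  proof (rule ccontr)
    assume "\<not> rho W \<le> rho T2"
    hence lt: "rho T2 < rho W" by simp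
    define s where "s = min ((rho T2 + rho W) / 2) ((rho T2 + 1) / 2)"
    have s: "rho T2 < s" "s < rho W" "s < 1" "0 < s" using lt r2 r0 unfolding s_def min_def by auto
    have "rho W \<le> s" unfolding W_def
      by (rule stepC[OF n A P1 R1 S1 P1i P2 R2 S2 P2i P1iP1 P2iP2 P2P2i AS1 AS2 P1inn P2inn R2nn S2np
            X1nn S1np XY2 s(4) s(3)]) (use s(1) in \<open>unfold T2_def\<close>)
    with s(2) show False by simp
  qed
  have "min (rho T1) (rho T2) = rho T2" using r21 by simp
  thus ?thesis using rW r2 unfolding T1_def T2_def W_def by simp
qed


end
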